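(* Let $V$ be a finite set and $A,B\subseteq V$ with $A\cap B\neq\emptyset$, and let $\lambda,\lambda'\in\mathbb{C}$. Then $$f_A^{(\lambda)}f_B^{(\lambda)}=\begin{cases}f_{A\cup B}^{(\lambda)}&\text{if }|A\cap B|=1,\\0&\text{if }|A\cap B|\ge2,\end{cases}$$ and more generally $$f_A^{(\lambda)}f_B^{(\lambda')}=\begin{cases}f_{A\cup B}^{(\lambda'')}&\text{if }|A\cap B|=1,\\0&\text{if }|A\cap B|\ge2,\end{cases}\qquad \lambda''=\frac{(|A|-1)\lambda+(|B|-1)\lambda'}{|A|+|B|-2}=\frac{(|A|-1)\lambda+(|B|-1)\lambda'}{|A\cup B|-1}.$$
   Context: For each $i\in V$ let $\psi_i,\bar\psi_i$ be anticommuting generators of a Grassmann algebra over $\mathbb{C}$. For $A\subseteq V$, $\tau_A=\prod_{i\in A}\bar\psi_i\psi_i$ ($\tau_\emptyset=1$), and for $\lambda\in\mathbb{C}$, $f_A^{(\lambda)}=\lambda(1-|A|)\tau_A+\sum_{i\in A}\tau_{A\setminus\{i\}}-\sum_{i,j\in A,\ i\neq j}\bar\psi_i\psi_j\,\tau_{A\setminus\{i,j\}}$. *)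

theory Defs
  imports Complex_Main
begin

text \<open>
  Grassmann algebra over the complex numbers generated by anticommuting
  generators psi_i, psibar_i (i of a linearly ordered index type).
  A generator is a pair (i, b) with b = False for psi_i and b = True for psibar_i.
  An element is given by its coefficient function on monomials, a monomial
  being a finite set of generators (written as the ordered product of its
  generators, in increasing order w.r.t. gen_less).
\<close>

type_synonym 'a grass = "('a \<times> bool) set \<Rightarrow> complex"

definition gen_less :: "('a::linorder \<times> bool) \<Rightarrow> ('a \<times> bool) \<Rightarrow> bool" where
  "gen_less g h \<longleftrightarrow> fst g < fst h \<or> (fst g = fst h \<and> \<not> snd g \<and> snd h)"

text \<open>Sign obtained when reordering the product of monomial S times monomial T.\<close>
definition gsign :: "('a::linorder \<times> bool) set \<Rightarrow> ('a \<times> bool) set \<Rightarrow> complex" where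
  "gsign S T = (-1) ^ card {(s, t). s \<in> S \<and> t \<in> T \<and> gen_less t s}"

definition gmul :: "'a::linorder grass \<Rightarrow> 'a grass \<Rightarrow> 'a grass" where
  "gmul x y = (\<lambda>U. \<Sum>S\<in>Pow U. gsign S (U - S) * x S * y (U - S))"

definition gadd :: "'a grass \<Rightarrow> 'a grass \<Rightarrow> 'a grass" where
  "gadd x y = (\<lambda>U. x U + y U)"

definition gsub :: "'a grass \<Rightarrow> 'a grass \<Rightarrow> 'a grass" where
  "gsub x y = (\<lambda>U. x U - y U)"

definition gscale :: "complex \<Rightarrow> 'a grass \<Rightarrow> 'a grass" where
  "gscale c x = (\<lambda>U. c * x U)"

definition gsum :: "('b \<Rightarrow> 'a grass) \<Rightarrow> 'b set \<Rightarrow> 'a grass" where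
  "gsum f I = (\<lambda>U. \<Sum>i\<in>I. f i U)"

definition gzero :: "'a grass" where
  "gzero = (\<lambda>U. 0)"

definition gone :: "'a grass" where
  "gone = (\<lambda>U. if U = {} then 1 else 0)"

definition psi :: "'a \<Rightarrow> 'a grass" where
  "psi i = (\<lambda>U. if U = {(i, False)} then 1 else 0)"

definition psibar :: "'a \<Rightarrow> 'a grass" where
  "psibar i = (\<lambda>U. if U = {(i, True)} then 1 else 0)"

text \<open>tau_A = product over i in A of psibar_i psi_i (tau of the empty set is 1);
  the factors are even, so the order (here increasing) is irrelevant.\<close>
definition tau :: "'a::linorder set \<Rightarrow> 'a grass" where
  "tau A = foldr (\<lambda>i acc. gmul (gmul (psibar i) (psi i)) acc) (sorted_list_of_set A) gone"

definition fA :: "complex \<Rightarrow> 'a::linorder set \<Rightarrow> 'a grass" where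
  "fA lam A =
     gsub
       (gadd (gscale (lam * (1 - of_nat (card A))) (tau A))
             (gsum (\<lambda>i. tau (A - {i})) A))
       (gsum (\<lambda>(i, j). gmul (gmul (psibar i) (psi j)) (tau (A - {i, j})))
             {(i, j). i \<in> A \<and> j \<in> A \<and> i \<noteq> j})"

end

theory Submission
  imports Defs
begin

definition ninv :: "('a::linorder \<times> bool) set \<Rightarrow> ('a \<times> bool) set \<Rightarrow> nat" where
  "ninv S T = card {(s, t). s \<in> S \<and> t \<in> T \<and> gen_less t s}"

lemma gsign_ninv: "gsign S T = (-1) ^ ninv S T"
  by (simp add: gsign_def ninv_def)

lemma gen_less_asym: "gen_less g h \<Longrightarrow> \<not> gen_less h g"
  by (auto simp: gen_less_def)

lemma gen_less_total: "g \<noteq> h \<Longrightarrow> gen_less g h \<or> gen_less h g"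
  by (cases g; cases h) (auto simp: gen_less_def)

lemma ninv_union_left:
  assumes "finite R" "finite T" "finite W" "R \<inter> T = {}"
  shows "ninv (R \<union> T) W = ninv R W + ninv T W"
proof -
  have "{(s, t). s \<in> R \<union> T \<and> t \<in> W \<and> gen_less t s} =
        {(s, t). s \<in> R \<and> t \<in> W \<and> gen_less t s} \<union> {(s, t). s \<in> T \<and> t \<in> W \<and> gen_less t s}"
    by auto
  moreover have "finite {(s, t). s \<in> R \<and> t \<in> W \<and> gen_less t s}"
    by (rule finite_subset[of _ "R \<times> W"]) (use assms in auto)
  moreover have "finite {(s, t). s \<in> T \<and> t \<in> W \<and> gen_less t s}"
    by (rule finite_subset[of _ "T \<times> W"]) (use assms in auto)
  ultimately show ?thesis unfolding ninv_def
    by (subst card_Un_disjoint[symmetric]) (use assms in auto)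
qed

lemma ninv_union_right:
  assumes "finite R" "finite T" "finite W" "T \<inter> W = {}"
  shows "ninv R (T \<union> W) = ninv R T + ninv R W"
proof -
  have "{(s, t). s \<in> R \<and> t \<in> T \<union> W \<and> gen_less t s} =
        {(s, t). s \<in> R \<and> t \<in> T \<and> gen_less t s} \<union> {(s, t). s \<in> R \<and> t \<in> W \<and> gen_less t s}"
    by auto
  moreover have "finite {(s, t). s \<in> R \<and> t \<in> T \<and> gen_less t s}"
    by (rule finite_subset[of _ "R \<times> T"]) (use assms in auto)
  moreover have "finite {(s, t). s \<in> R \<and> t \<in> W \<and> gen_less t s}"
    by (rule finite_subset[of _ "R \<times> W"]) (use assms in auto)
  ultimately show ?thesis unfolding ninv_def
    by (subst card_Un_disjoint[symmetric]) (use assms in auto)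
qed

lemma ninv_swap:
  assumes "finite S" "finite T" "S \<inter> T = {}"
  shows "ninv S T + ninv T S = card S * card T"
proof -
  let ?A = "{(s, t). s \<in> S \<and> t \<in> T \<and> gen_less t s}"
  let ?B = "{(s, t). s \<in> S \<and> t \<in> T \<and> gen_less s t}"
  have fA: "finite ?A" by (rule finite_subset[of _ "S \<times> T"]) (use assms in auto)
  have fB: "finite ?B" by (rule finite_subset[of _ "S \<times> T"]) (use assms in auto)
  have un: "?A \<union> ?B = S \<times> T"
  proof
    show "?A \<union> ?B \<subseteq> S \<times> T" by auto
    show "S \<times> T \<subseteq> ?A \<union> ?B"
    proof
      fix p assume p: "p \<in> S \<times> T"
      then have "fst p \<noteq> snd p" using assms(3) by auto
      then have "gen_less (fst p) (snd p) \<or> gen_less (snd p) (fst p)" by (rule gen_less_total)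
      then show "p \<in> ?A \<union> ?B" using p by (cases p) auto
    qed
  qed
  have dis: "?A \<inter> ?B = {}" using gen_less_asym by auto
  have "ninv T S = card (prod.swap ` ?B)"
    unfolding ninv_def by (rule arg_cong[where f=card]) auto
  also have "\<dots> = card ?B" by (rule card_image) (simp add: inj_on_def)
  finally have "ninv S T + ninv T S = card ?A + card ?B" by (simp add: ninv_def)
  also have "\<dots> = card (S \<times> T)" using card_Un_disjoint[OF fA fB dis] un by simp
  finally show ?thesis by (simp add: card_cartesian_product)
qed

lemma gsign_swap:
  assumes "finite U" "S \<subseteq> U"
  shows "gsign S (U - S) = (-1) ^ (card S * card (U - S)) * gsign (U - S) S"
proof -
  have fS: "finite S" using assms finite_subset by blast
  have e: "ninv S (U - S) + ninv (U - S) S = card S * card (U - S)"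
    by (rule ninv_swap) (use assms fS in auto)
  have "(-1::complex) ^ ninv S (U - S) = (-1) ^ (ninv S (U - S) + ninv (U - S) S) * (-1) ^ ninv (U - S) S"
    by (simp add: power_add mult.assoc power_mult_distrib[symmetric])
  then show ?thesis using e by (simp add: gsign_ninv)
qed

lemma gsign_assoc:
  assumes "finite R" "finite T" "finite W" "R \<inter> T = {}" "R \<inter> W = {}" "T \<inter> W = {}"
  shows "gsign R T * gsign (R \<union> T) W = gsign R (T \<union> W) * gsign T W"
  using assms by (simp add: gsign_ninv ninv_union_left ninv_union_right power_add)

lemma gmul_infinite: "infinite U \<Longrightarrow> gmul x y U = 0"
  by (simp add: gmul_def)

lemma gmul_assoc: "gmul (gmul x y) z = gmul x (gmul y z)"
proof (rule ext)
  fix U :: "('a \<times> bool) set"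
  show "gmul (gmul x y) z U = gmul x (gmul y z) U"
  proof (cases "finite U")
    case False then show ?thesis by (simp add: gmul_infinite)
  next
    case fin: True
    define F where "F R T = gsign R T * gsign (R \<union> T) (U - (R \<union> T)) * x R * y T * z (U - (R \<union> T))" for R T
    have "gmul (gmul x y) z U = (\<Sum>S\<in>Pow U. \<Sum>R\<in>Pow S. F R (S - R))"
      unfolding gmul_def
    proof (rule sum.cong[OF refl])
      fix S assume S: "S \<in> Pow U"
      have "(\<Sum>R\<in>Pow S. F R (S - R)) = (\<Sum>R\<in>Pow S. gsign S (U - S) * (gsign R (S - R) * x R * y (S - R)) * z (U - S))"
      proof (rule sum.cong[OF refl])
        fix R assume "R \<in> Pow S"
        then have "R \<union> (S - R) = S" by auto
        then show "F R (S - R) = gsign S (U - S) * (gsign R (S - R) * x R * y (S - R)) * z (U - S)"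
          unfolding F_def by (simp only: mult_ac)
      qed
      also have "\<dots> = gsign S (U - S) * (\<Sum>R\<in>Pow S. gsign R (S - R) * x R * y (S - R)) * z (U - S)"
        by (simp only: sum_distrib_left sum_distrib_right)
      finally show "gsign S (U - S) * (\<Sum>R\<in>Pow S. gsign R (S - R) * x R * y (S - R)) * z (U - S) = (\<Sum>R\<in>Pow S. F R (S - R))" by simp
    qed
    also have "\<dots> = (\<Sum>S\<in>Pow U. \<Sum>R\<in>{R. R \<in> Pow U \<and> R \<subseteq> S}. F R (S - R))"
      by (rule sum.cong[OF refl]) (rule sum.cong, auto)
    also have "\<dots> = (\<Sum>R\<in>Pow U. \<Sum>S\<in>{S. S \<in> Pow U \<and> R \<subseteq> S}. F R (S - R))"
      by (rule sum.swap_restrict) (use fin in auto)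
    also have "\<dots> = (\<Sum>R\<in>Pow U. \<Sum>T\<in>Pow (U - R). F R T)"
    proof (rule sum.cong[OF refl])
      fix R assume R: "R \<in> Pow U"
      show "(\<Sum>S\<in>{S. S \<in> Pow U \<and> R \<subseteq> S}. F R (S - R)) = (\<Sum>T\<in>Pow (U - R). F R T)"
      proof (rule sum.reindex_bij_witness[where i="\<lambda>T. R \<union> T" and j="\<lambda>S. S - R"])
      qed (use R in auto)
    qed
    also have "\<dots> = (\<Sum>R\<in>Pow U. gsign R (U - R) * x R * (\<Sum>S\<in>Pow (U - R). gsign S (U - R - S) * y S * z (U - R - S)))"
    proof (rule sum.cong[OF refl])
      fix R assume R: "R \<in> Pow U"
      have "(\<Sum>T\<in>Pow (U - R). F R T) =
            (\<Sum>T\<in>Pow (U - R). gsign R (U - R) * x R * (gsign T (U - R - T) * y T * z (U - R - T)))"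
      proof (rule sum.cong[OF refl])
        fix T assume T: "T \<in> Pow (U - R)"
        have fR: "finite R" using R fin finite_subset by auto
        have fT: "finite T" using T fin finite_subset by auto
        have e1: "U - (R \<union> T) = U - R - T" by auto
        have e2: "T \<union> (U - R - T) = U - R" using T by auto
        have "gsign R T * gsign (R \<union> T) (U - R - T) = gsign R (T \<union> (U - R - T)) * gsign T (U - R - T)"
          by (rule gsign_assoc) (use fR fT fin T in auto)
        then have "gsign R T * gsign (R \<union> T) (U - R - T) = gsign R (U - R) * gsign T (U - R - T)"
          by (simp only: e2)
        then show "F R T = gsign R (U - R) * x R * (gsign T (U - R - T) * y T * z (U - R - T))"
          unfolding F_def e1 by (simp only: mult_ac)
      qed
      also have "\<dots> = gsign R (U - R) * x R * (\<Sum>S\<in>Pow (U - R). gsign S (U - R - S) * y S * z (U - R - S))"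
        by (simp only: sum_distrib_left)
      finally show "(\<Sum>T\<in>Pow (U - R). F R T) = gsign R (U - R) * x R * (\<Sum>S\<in>Pow (U - R). gsign S (U - R - S) * y S * z (U - R - S))" .
    qed
    also have "\<dots> = gmul x (gmul y z) U" by (simp add: gmul_def)
    finally show ?thesis .
  qed
qed

typedef 'a ga = "{x :: ('a \<times> bool) set \<Rightarrow> complex. \<forall>U. infinite U \<longrightarrow> x U = 0}"
  morphisms rep Abs_ga
  by (rule exI[of _ "\<lambda>U. 0"]) auto

setup_lifting type_definition_ga

lemma rep_inf: "infinite U \<Longrightarrow> rep x U = 0"
  using rep[of x] by auto

lemma ga_eqI: "(\<And>U. rep x U = rep y U) \<Longrightarrow> x = y"
  by (metis ext rep_inject)

lemma gsign_empty1[simp]: "gsign {} U = 1" by (simp add: gsign_def)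
lemma gsign_empty2[simp]: "gsign U {} = 1" by (simp add: gsign_def)

instantiation ga :: (linorder) ring_1
begin
lift_definition zero_ga :: "'a ga" is "\<lambda>U. 0" by simp
lift_definition one_ga :: "'a ga" is gone by (auto simp: gone_def)
lift_definition plus_ga :: "'a ga \<Rightarrow> 'a ga \<Rightarrow> 'a ga" is "\<lambda>x y U. x U + y U" by simp
lift_definition minus_ga :: "'a ga \<Rightarrow> 'a ga \<Rightarrow> 'a ga" is "\<lambda>x y U. x U - y U" by simp
lift_definition uminus_ga :: "'a ga \<Rightarrow> 'a ga" is "\<lambda>x U. - x U" by simp
lift_definition times_ga :: "'a ga \<Rightarrow> 'a ga \<Rightarrow> 'a ga" is gmul by (simp add: gmul_infinite)

lemma one_left: "rep (1 * x) = rep x"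
proof (rule ext)
  fix U show "rep (1 * x) U = rep x U"
  proof (cases "finite U")
    case False then show ?thesis by (simp add: rep_inf)
  next
    case True
    have "rep (1 * x) U = (\<Sum>S\<in>Pow U. if S = {} then rep x (U - S) else 0)"
      unfolding times_ga.rep_eq one_ga.rep_eq gmul_def gone_def
      by (rule sum.cong) auto
    also have "\<dots> = rep x U" by (subst sum.delta) (use True in auto)
    finally show ?thesis .
  qed
qed

lemma one_right: "rep (x * 1) = rep x"
proof (rule ext)
  fix U show "rep (x * 1) U = rep x U"
  proof (cases "finite U")
    case False then show ?thesis by (simp add: rep_inf)
  next
    case True
    have "rep (x * 1) U = (\<Sum>S\<in>Pow U. if S = U then rep x S else 0)"
      unfolding times_ga.rep_eq one_ga.rep_eq gmul_def gone_def
      by (rule sum.cong) auto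
    also have "\<dots> = rep x U" by (subst sum.delta) (use True in auto)
    finally show ?thesis .
  qed
qed

instance
proof
  fix a b c :: "'a ga"
  show "a * b * c = a * (b * c)" by transfer (rule gmul_assoc)
  show "a + b + c = a + (b + c)" by transfer (simp add: add.assoc)
  show "a + b = b + a" by transfer (simp add: add.commute)
  show "0 + a = a" by transfer simp
  show "- a + a = 0" by transfer simp
  show "a - b = a + - b" by transfer simp
  show "(a + b) * c = a * c + b * c"
    by transfer (simp add: gmul_def fun_eq_iff distrib_left distrib_right sum.distrib)
  show "a * (b + c) = a * b + a * c"
    by transfer (simp add: gmul_def fun_eq_iff distrib_left distrib_right sum.distrib)
  show "1 * a = a" using one_left rep_inject by blast
  show "a * 1 = a" using one_right rep_inject by blast
  show "(0::'a ga) \<noteq> 1"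
  proof
    assume "(0::'a ga) = 1"
    then have "rep (0::'a ga) {} = rep 1 {}" by simp
    then show False by (simp add: zero_ga.rep_eq one_ga.rep_eq gone_def)
  qed
qed
end

lemma rep_sum: "rep (sum f I) = (\<lambda>U. \<Sum>i\<in>I. rep (f i) U)"
proof (cases "finite I")
  case True then show ?thesis
    by (induction I rule: finite_induct) (auto simp: zero_ga.rep_eq plus_ga.rep_eq)
next
  case False then show ?thesis by (simp add: zero_ga.rep_eq)
qed

lift_definition sc :: "complex \<Rightarrow> 'a::linorder ga" is "\<lambda>c U. if U = {} then c else 0" by auto
lift_definition PS :: "'a \<Rightarrow> 'a::linorder ga" is psi by (auto simp: psi_def)
lift_definition PB :: "'a \<Rightarrow> 'a::linorder ga" is psibar by (auto simp: psibar_def)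

lemma rep_sc_mult: "rep (sc c * x) = (\<lambda>U. c * rep x U)"
proof (rule ext)
  fix U show "rep (sc c * x) U = c * rep x U"
  proof (cases "finite U")
    case False then show ?thesis by (simp add: rep_inf)
  next
    case True
    have "rep (sc c * x) U = (\<Sum>S\<in>Pow U. if S = {} then c * rep x (U - S) else 0)"
      unfolding times_ga.rep_eq sc.rep_eq gmul_def by (rule sum.cong) auto
    also have "\<dots> = c * rep x U" by (subst sum.delta) (use True in auto)
    finally show ?thesis .
  qed
qed

lemma rep_mult_sc: "rep (x * sc c) = (\<lambda>U. c * rep x U)"
proof (rule ext)
  fix U show "rep (x * sc c) U = c * rep x U"
  proof (cases "finite U")
    case False then show ?thesis by (simp add: rep_inf)
  next
    case True
    have "rep (x * sc c) U = (\<Sum>S\<in>Pow U. if S = U then c * rep x S else 0)"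
      unfolding times_ga.rep_eq sc.rep_eq gmul_def by (rule sum.cong) auto
    also have "\<dots> = c * rep x U" by (subst sum.delta) (use True in auto)
    finally show ?thesis .
  qed
qed

lemma sc_comm: "sc c * x = x * sc c"
  by (rule ga_eqI) (simp add: rep_sc_mult rep_mult_sc)

lemma sc_add: "sc (a + b) = sc a + sc b" by transfer auto
lemma sc_diff: "sc (a - b) = sc a - sc b" by transfer auto
lemma sc_mult: "sc (a * b) = sc a * sc b" by (rule ga_eqI) (simp add: rep_sc_mult sc.rep_eq)
lemma sc_1: "sc 1 = 1" by transfer (auto simp: gone_def)
lemma sc_0: "sc 0 = 0" by transfer auto

definition ev :: "'a::linorder ga \<Rightarrow> bool" where
  "ev x \<longleftrightarrow> (\<forall>U. rep x U \<noteq> 0 \<longrightarrow> even (card U))"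
definition od :: "'a::linorder ga \<Rightarrow> bool" where
  "od x \<longleftrightarrow> (\<forall>U. rep x U \<noteq> 0 \<longrightarrow> odd (card U))"

lemma times_nz:
  assumes "rep (x * y) U \<noteq> 0"
  obtains S where "S \<subseteq> U" "finite U" "rep x S \<noteq> 0" "rep y (U - S) \<noteq> 0"
    "card U = card S + card (U - S)"
proof -
  have fin: "finite U" using assms rep_inf by blast
  have "\<exists>S\<in>Pow U. gsign S (U - S) * rep x S * rep y (U - S) \<noteq> 0"
  proof (rule ccontr)
    assume "\<not> ?thesis"
    then have "(\<Sum>S\<in>Pow U. gsign S (U - S) * rep x S * rep y (U - S)) = 0"
      by (intro sum.neutral) blast
    then show False using assms by (simp add: times_ga.rep_eq gmul_def)
  qed
  then obtain S where S: "S \<subseteq> U" "gsign S (U - S) * rep x S * rep y (U - S) \<noteq> 0" by blast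
  then have nz: "rep x S \<noteq> 0" "rep y (U - S) \<noteq> 0" by auto
  have fS: "finite S" using S fin finite_subset by auto
  have "card U = card S + card (U - S)"
    using fin S card_Diff_subset[OF fS S(1)] card_mono[OF fin S(1)] by simp
  then show ?thesis using that S nz fin by blast
qed

lemma ev_mult: assumes "ev x" "ev y" shows "ev (x * y)"
  unfolding ev_def od_def
proof (intro allI impI)
  fix U assume "rep (x * y) U \<noteq> 0"
  then obtain S where "rep x S \<noteq> 0" "rep y (U - S) \<noteq> 0" "card U = card S + card (U - S)"
    by (rule times_nz)
  moreover have "even (card S)" "even (card (U - S))" using assms calculation unfolding ev_def od_def by blast+
  ultimately show "even (card U)" by simp
qed
lemma ev_mult2: assumes "od x" "od y" shows "ev (x * y)"
  unfolding ev_def od_def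
proof (intro allI impI)
  fix U assume "rep (x * y) U \<noteq> 0"
  then obtain S where "rep x S \<noteq> 0" "rep y (U - S) \<noteq> 0" "card U = card S + card (U - S)"
    by (rule times_nz)
  moreover have "odd (card S)" "odd (card (U - S))" using assms calculation unfolding ev_def od_def by blast+
  ultimately show "even (card U)" by simp
qed
lemma od_mult1: assumes "ev x" "od y" shows "od (x * y)"
  unfolding ev_def od_def
proof (intro allI impI)
  fix U assume "rep (x * y) U \<noteq> 0"
  then obtain S where "rep x S \<noteq> 0" "rep y (U - S) \<noteq> 0" "card U = card S + card (U - S)"
    by (rule times_nz)
  moreover have "even (card S)" "odd (card (U - S))" using assms calculation unfolding ev_def od_def by blast+
  ultimately show "odd (card U)" by simp
qed
lemma od_mult2: assumes "od x" "ev y" shows "od (x * y)"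
  unfolding ev_def od_def
proof (intro allI impI)
  fix U assume "rep (x * y) U \<noteq> 0"
  then obtain S where "rep x S \<noteq> 0" "rep y (U - S) \<noteq> 0" "card U = card S + card (U - S)"
    by (rule times_nz)
  moreover have "odd (card S)" "even (card (U - S))" using assms calculation unfolding ev_def od_def by blast+
  ultimately show "odd (card U)" by simp
qed
lemma ev_add: assumes "ev x" "ev y" shows "ev (x + y)"
  unfolding ev_def
proof (intro allI impI)
  fix U assume h: "rep (x + y) U \<noteq> 0"
  have "rep x U \<noteq> 0 \<or> rep y U \<noteq> 0"
  proof (rule ccontr)
    assume "\<not> ?thesis" then show False using h by (simp add: plus_ga.rep_eq)
  qed
  then show "even (card U)" using assms unfolding ev_def by blast
qed
lemma ev_diff: assumes "ev x" "ev y" shows "ev (x - y)"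
  unfolding ev_def
proof (intro allI impI)
  fix U assume h: "rep (x - y) U \<noteq> 0"
  have "rep x U \<noteq> 0 \<or> rep y U \<noteq> 0"
  proof (rule ccontr)
    assume "\<not> ?thesis" then show False using h by (simp add: minus_ga.rep_eq)
  qed
  then show "even (card U)" using assms unfolding ev_def by blast
qed
lemma od_add: assumes "od x" "od y" shows "od (x + y)"
  unfolding od_def
proof (intro allI impI)
  fix U assume h: "rep (x + y) U \<noteq> 0"
  have "rep x U \<noteq> 0 \<or> rep y U \<noteq> 0"
  proof (rule ccontr)
    assume "\<not> ?thesis" then show False using h by (simp add: plus_ga.rep_eq)
  qed
  then show "odd (card U)" using assms unfolding od_def by blast
qed
lemma od_diff: assumes "od x" "od y" shows "od (x - y)"
  unfolding od_def
proof (intro allI impI)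
  fix U assume h: "rep (x - y) U \<noteq> 0"
  have "rep x U \<noteq> 0 \<or> rep y U \<noteq> 0"
  proof (rule ccontr)
    assume "\<not> ?thesis" then show False using h by (simp add: minus_ga.rep_eq)
  qed
  then show "odd (card U)" using assms unfolding od_def by blast
qed
lemma ev_sum: assumes "\<And>i. i \<in> I \<Longrightarrow> ev (f i)" shows "ev (sum f I)"
  unfolding ev_def
proof (intro allI impI)
  fix U assume h: "rep (sum f I) U \<noteq> 0"
  then obtain i where "i \<in> I" "rep (f i) U \<noteq> 0" unfolding rep_sum using sum.neutral by force
  then show "even (card U)" using assms unfolding ev_def by blast
qed
lemma od_sum: assumes "\<And>i. i \<in> I \<Longrightarrow> od (f i)" shows "od (sum f I)"
  unfolding od_def
proof (intro allI impI)
  fix U assume h: "rep (sum f I) U \<noteq> 0"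
  then obtain i where "i \<in> I" "rep (f i) U \<noteq> 0" unfolding rep_sum using sum.neutral by force
  then show "odd (card U)" using assms unfolding od_def by blast
qed
lemma ev_1: "ev 1" unfolding ev_def by (simp add: one_ga.rep_eq gone_def)
lemma ev_sc: "ev (sc c)" unfolding ev_def by (simp add: sc.rep_eq)
lemma od_PS: "od (PS i)" unfolding od_def by (simp add: PS.rep_eq psi_def)
lemma od_PB: "od (PB i)" unfolding od_def by (simp add: PB.rep_eq psibar_def)

lemma gmul_swap_sum:
  assumes "finite U"
  shows "gmul y x U = (\<Sum>S\<in>Pow U. gsign (U - S) S * y (U - S) * x S)"
  unfolding gmul_def
  by (rule sum.reindex_bij_witness[where i="\<lambda>S. U - S" and j="\<lambda>S. U - S"]) (auto simp: double_diff)

lemma ev_comm: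
  assumes "ev x" shows "x * y = y * x"
proof (rule ga_eqI)
  fix U show "rep (x * y) U = rep (y * x) U"
  proof (cases "finite U")
    case False then show ?thesis by (simp add: rep_inf)
  next
    case fin: True
    show ?thesis unfolding times_ga.rep_eq gmul_swap_sum[OF fin, of "rep y"]
      unfolding gmul_def
    proof (rule sum.cong[OF refl])
      fix S assume S: "S \<in> Pow U"
      show "gsign S (U - S) * rep x S * rep y (U - S) = gsign (U - S) S * rep y (U - S) * rep x S"
      proof (cases "rep x S = 0")
        case True then show ?thesis by simp
      next
        case False
        then have "even (card S)" using assms by (simp add: ev_def)
        then show ?thesis using gsign_swap[OF fin, of S] S by simp
      qed
    qed
  qed
qed

lemma od_comm:
  assumes "od x" "od y" shows "x * y = - (y * x)"
proof (rule ga_eqI)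
  fix U show "rep (x * y) U = rep (- (y * x)) U"
  proof (cases "finite U")
    case False then show ?thesis by (simp add: rep_inf)
  next
    case fin: True
    show ?thesis unfolding uminus_ga.rep_eq times_ga.rep_eq gmul_swap_sum[OF fin, of "rep y"]
      unfolding gmul_def sum_negf[symmetric]
    proof (rule sum.cong[OF refl])
      fix S assume S: "S \<in> Pow U"
      show "gsign S (U - S) * rep x S * rep y (U - S) = - (gsign (U - S) S * rep y (U - S) * rep x S)"
      proof (cases "rep x S = 0 \<or> rep y (U - S) = 0")
        case True then show ?thesis by auto
      next
        case False
        then have "odd (card S)" "odd (card (U - S))" using assms by (auto simp: od_def)
        then show ?thesis using gsign_swap[OF fin, of S] S by simp
      qed
    qed
  qed
qed

lemma self_neg: "(a::'a::linorder ga) = - a \<Longrightarrow> a = 0"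
proof -
  assume h: "a = - a"
  show "a = 0"
  proof (rule ga_eqI)
    fix U have "rep a U = - rep a U" using arg_cong[OF h, of "\<lambda>z. rep z U"] by (simp add: uminus_ga.rep_eq)
    then show "rep a U = rep 0 U" by (simp add: zero_ga.rep_eq)
  qed
qed

lemma od_sq: "od a \<Longrightarrow> a * a = 0"
  by (rule self_neg) (rule od_comm)

definition X :: "'a::linorder \<Rightarrow> 'a ga" where "X i = PB i * PS i"
definition tT :: "'a::linorder set \<Rightarrow> 'a ga" where
  "tT A = foldr (\<lambda>i acc. X i * acc) (sorted_list_of_set A) 1"

lemma ev_X: "ev (X i)" unfolding X_def by (rule ev_mult2[OF od_PB od_PS])

lemma rep_foldr: "rep (foldr (\<lambda>i acc. X i * acc) xs 1) = foldr (\<lambda>i acc. gmul (gmul (psibar i) (psi i)) acc) xs gone"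
  by (induction xs) (auto simp: X_def times_ga.rep_eq PB.rep_eq PS.rep_eq one_ga.rep_eq)

lemma rep_tT: "rep (tT A) = tau A"
  unfolding tT_def tau_def by (rule rep_foldr)

lemma ev_foldr: "ev (foldr (\<lambda>i acc. X i * acc) xs 1)"
  by (induction xs) (auto intro: ev_mult ev_X ev_1)

lemma ev_tT: "ev (tT A)" unfolding tT_def by (rule ev_foldr)

lemma foldr_insort: "foldr (\<lambda>i acc. X i * acc) (insort x xs) a = X x * foldr (\<lambda>i acc. X i * acc) xs a"
proof (induction xs)
  case Nil then show ?case by simp
next
  case (Cons y ys)
  have c: "X x * (X y * b) = X y * (X x * b)" for b
    by (metis mult.assoc ev_comm[OF ev_X])
  show ?case using Cons by (auto simp: c)
qed

lemma tT_empty: "tT {} = 1" by (simp add: tT_def)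

lemma tT_insert: "finite A \<Longrightarrow> k \<notin> A \<Longrightarrow> tT (insert k A) = X k * tT A"
  unfolding tT_def by (simp add: sorted_list_of_set_insert foldr_insort)

lemma tT_union: assumes "finite D" "finite E" "D \<inter> E = {}" shows "tT (D \<union> E) = tT D * tT E"
  using assms
proof (induction D rule: finite_induct)
  case empty then show ?case by (simp add: tT_empty)
next
  case (insert a D)
  then have "tT (insert a D \<union> E) = X a * tT (D \<union> E)" by (simp add: tT_insert)
  also have "\<dots> = X a * (tT D * tT E)" using insert by simp
  also have "\<dots> = tT (insert a D) * tT E" using insert by (simp add: tT_insert mult.assoc)
  finally show ?case .
qed

lemma PS_sq: "PS k * PS k = 0" by (rule od_sq[OF od_PS])
lemma PB_sq: "PB k * PB k = 0" by (rule od_sq[OF od_PB])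
lemma PS_PB: "PS k * PB k = - X k" unfolding X_def by (rule od_comm[OF od_PS od_PB])
lemma X_X: "X k * X k = 0"
proof -
  have "X k * X k = PB k * (PS k * PB k) * PS k" by (simp add: X_def mult.assoc)
  also have "\<dots> = - (PB k * PB k * (PS k * PS k))" by (simp add: PS_PB X_def mult.assoc)
  finally show ?thesis by (simp add: PS_sq)
qed
lemma X_PB: "X k * PB k = 0"
proof -
  have "X k * PB k = PB k * (PS k * PB k)" by (simp add: X_def mult.assoc)
  also have "\<dots> = - (PB k * PB k * PS k)" by (simp add: PS_PB X_def mult.assoc)
  finally show ?thesis by (simp add: PB_sq)
qed
lemma X_PS: "X k * PS k = 0" by (simp add: X_def mult.assoc PS_sq)
lemma PB_X: "PB k * X k = 0" by (simp add: X_def mult.assoc[symmetric] PB_sq)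
lemma PS_X: "PS k * X k = 0"
proof -
  have "PS k * X k = (PS k * PB k) * PS k" by (simp add: X_def mult.assoc)
  also have "\<dots> = - (PB k * (PS k * PS k))" by (simp add: PS_PB X_def mult.assoc)
  finally show ?thesis by (simp add: PS_sq)
qed

definition FA :: "complex \<Rightarrow> 'a::linorder set \<Rightarrow> 'a ga" where
  "FA lam A = sc (lam * (1 - of_nat (card A))) * tT A + (\<Sum>i\<in>A. tT (A - {i}))
     - (\<Sum>(i, j)\<in>{(i, j). i \<in> A \<and> j \<in> A \<and> i \<noteq> j}. PB i * PS j * tT (A - {i, j}))"

lemma rep_FA: "rep (FA lam A) = fA lam A"
  unfolding FA_def fA_def minus_ga.rep_eq plus_ga.rep_eq rep_sc_mult
  by (simp add: minus_ga.rep_eq plus_ga.rep_eq rep_sc_mult rep_sum rep_tT times_ga.rep_eq PB.rep_eq PS.rep_eq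
      gsub_def gadd_def gscale_def gsum_def case_prod_beta)

lemma ev_FA: "ev (FA lam A)"
  unfolding FA_def
  by (intro ev_diff ev_add ev_mult ev_sc ev_tT ev_sum) (auto simp: case_prod_beta intro!: ev_mult[OF ev_mult2[OF od_PB od_PS] ev_tT])

definition PP :: "'a::linorder set \<Rightarrow> 'a ga" where "PP D = (\<Sum>j\<in>D. PS j * tT (D - {j}))"
definition QQ :: "'a::linorder set \<Rightarrow> 'a ga" where "QQ D = (\<Sum>i\<in>D. PB i * tT (D - {i}))"

lemma od_PP: "od (PP D)" unfolding PP_def by (intro od_sum od_mult2 od_PS ev_tT)
lemma od_QQ: "od (QQ D)" unfolding QQ_def by (intro od_sum od_mult2 od_PB ev_tT)

lemma X_comm: "X k * y = y * X k" by (rule ev_comm[OF ev_X])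

lemma pairs_insert:
  assumes "k \<notin> D"
  shows "{(i, j). i \<in> insert k D \<and> j \<in> insert k D \<and> i \<noteq> j} =
     {(i, j). i \<in> D \<and> j \<in> D \<and> i \<noteq> j} \<union> (Pair k ` D \<union> (\<lambda>i. (i, k)) ` D)"
  using assms by auto

lemma decomp:
  fixes D :: "'a::linorder set"
  assumes fin: "finite D" and k: "k \<notin> D"
  shows "FA lam (insert k D) = X k * (FA lam D - sc lam * tT D) + tT D - PB k * PP D + PS k * QQ D"
proof -
  define a :: "'a ga" where "a = sc (lam * (1 - of_nat (card D)))"
  have h1: "sc (lam * (1 - of_nat (card (insert k D)))) * tT (insert k D) = X k * (a * tT D - sc lam * tT D)"
  proof -
    have "lam * (1 - of_nat (card (insert k D))) = lam * (1 - of_nat (card D)) - lam"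
      using fin k by (simp add: algebra_simps)
    then have "sc (lam * (1 - of_nat (card (insert k D)))) = a - sc lam" by (simp add: a_def sc_diff)
    then have "sc (lam * (1 - of_nat (card (insert k D)))) * tT (insert k D) = (a - sc lam) * (X k * tT D)"
      using fin k by (simp add: tT_insert)
    also have "\<dots> = ((a - sc lam) * X k) * tT D" by (simp only: mult.assoc)
    also have "\<dots> = (X k * (a - sc lam)) * tT D" by (simp only: X_comm)
    also have "\<dots> = X k * (a * tT D - sc lam * tT D)" by (simp only: mult.assoc left_diff_distrib)
    finally show ?thesis .
  qed
  have h2: "(\<Sum>i\<in>insert k D. tT (insert k D - {i})) = tT D + X k * (\<Sum>i\<in>D. tT (D - {i}))"
  proof -
    have "(\<Sum>i\<in>insert k D. tT (insert k D - {i})) = tT (insert k D - {k}) + (\<Sum>i\<in>D. tT (insert k D - {i}))"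
      using fin k by (simp add: sum.insert)
    also have "insert k D - {k} = D" using k by auto
    also have "(\<Sum>i\<in>D. tT (insert k D - {i})) = (\<Sum>i\<in>D. X k * tT (D - {i}))"
    proof (rule sum.cong[OF refl])
      fix i assume i: "i \<in> D"
      then have "insert k D - {i} = insert k (D - {i})" using k by auto
      then show "tT (insert k D - {i}) = X k * tT (D - {i})" using fin k by (simp add: tT_insert)
    qed
    finally show ?thesis by (simp add: sum_distrib_left)
  qed
  define F where "F i j = PB i * PS j * tT (insert k D - {i, j})" for i j
  have fp: "finite {(i, j). i \<in> D \<and> j \<in> D \<and> i \<noteq> j}"
    by (rule finite_subset[of _ "D \<times> D"]) (use fin in auto)
  have h3: "(\<Sum>(i, j)\<in>{(i, j). i \<in> insert k D \<and> j \<in> insert k D \<and> i \<noteq> j}. F i j) =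
     (\<Sum>(i, j)\<in>{(i, j). i \<in> D \<and> j \<in> D \<and> i \<noteq> j}. F i j) + ((\<Sum>j\<in>D. F k j) + (\<Sum>i\<in>D. F i k))"
  proof -
    have d1: "{(i, j). i \<in> D \<and> j \<in> D \<and> i \<noteq> j} \<inter> (Pair k ` D \<union> (\<lambda>i. (i, k)) ` D) = {}" using k by auto
    have d2: "Pair k ` D \<inter> (\<lambda>i. (i, k)) ` D = {}" using k by auto
    have "(\<Sum>(i, j)\<in>{(i, j). i \<in> insert k D \<and> j \<in> insert k D \<and> i \<noteq> j}. F i j) =
       (\<Sum>(i, j)\<in>{(i, j). i \<in> D \<and> j \<in> D \<and> i \<noteq> j}. F i j) + (\<Sum>(i, j)\<in>Pair k ` D \<union> (\<lambda>i. (i, k)) ` D. F i j)"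
      unfolding pairs_insert[OF k] by (rule sum.union_disjoint) (use fp fin d1 in auto)
    also have "(\<Sum>(i, j)\<in>Pair k ` D \<union> (\<lambda>i. (i, k)) ` D. F i j) =
       (\<Sum>(i, j)\<in>Pair k ` D. F i j) + (\<Sum>(i, j)\<in>(\<lambda>i. (i, k)) ` D. F i j)"
      by (rule sum.union_disjoint) (use fin d2 in auto)
    also have "(\<Sum>(i, j)\<in>Pair k ` D. F i j) = (\<Sum>j\<in>D. F k j)"
      by (subst sum.reindex) (auto simp: inj_on_def)
    also have "(\<Sum>(i, j)\<in>(\<lambda>i. (i, k)) ` D. F i j) = (\<Sum>i\<in>D. F i k)"
      by (subst sum.reindex) (auto simp: inj_on_def)
    finally show ?thesis .
  qed
  have h4: "(\<Sum>(i, j)\<in>{(i, j). i \<in> D \<and> j \<in> D \<and> i \<noteq> j}. F i j) =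
      X k * (\<Sum>(i, j)\<in>{(i, j). i \<in> D \<and> j \<in> D \<and> i \<noteq> j}. PB i * PS j * tT (D - {i, j}))"
    unfolding sum_distrib_left
  proof (rule sum.cong[OF refl])
    fix p assume "p \<in> {(i, j). i \<in> D \<and> j \<in> D \<and> i \<noteq> j}"
    then obtain i j where p: "p = (i, j)" "i \<in> D" "j \<in> D" by auto
    then have "insert k D - {i, j} = insert k (D - {i, j})" using k by auto
    then have "F i j = PB i * PS j * (X k * tT (D - {i, j}))" using fin k by (simp add: F_def tT_insert)
    also have "\<dots> = (PB i * PS j * X k) * tT (D - {i, j})" by (simp only: mult.assoc)
    also have "\<dots> = (X k * (PB i * PS j)) * tT (D - {i, j})" by (simp only: X_comm)
    also have "\<dots> = X k * (PB i * PS j * tT (D - {i, j}))" by (simp only: mult.assoc)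
    finally show "(case p of (i, j) \<Rightarrow> F i j) = X k * (case p of (i, j) \<Rightarrow> PB i * PS j * tT (D - {i, j}))"
      using p by simp
  qed
  have h5: "(\<Sum>j\<in>D. F k j) = PB k * PP D"
    unfolding PP_def sum_distrib_left
  proof (rule sum.cong[OF refl])
    fix j assume "j \<in> D"
    then have "insert k D - {k, j} = D - {j}" using k by auto
    then show "F k j = PB k * (PS j * tT (D - {j}))" by (simp add: F_def mult.assoc)
  qed
  have h6: "(\<Sum>i\<in>D. F i k) = - (PS k * QQ D)"
    unfolding QQ_def sum_distrib_left sum_negf[symmetric]
  proof (rule sum.cong[OF refl])
    fix i assume "i \<in> D"
    then have "insert k D - {i, k} = D - {i}" using k by auto
    then have "F i k = PB i * PS k * tT (D - {i})" by (simp add: F_def)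
    also have "\<dots> = - (PS k * PB i) * tT (D - {i})" by (simp add: od_comm[OF od_PB od_PS])
    finally show "F i k = - (PS k * (PB i * tT (D - {i})))" by (simp add: mult.assoc)
  qed
  have e: "FA lam (insert k D) = X k * (a * tT D - sc lam * tT D) + (tT D + X k * (\<Sum>i\<in>D. tT (D - {i})))
      - (X k * (\<Sum>(i, j)\<in>{(i, j). i \<in> D \<and> j \<in> D \<and> i \<noteq> j}. PB i * PS j * tT (D - {i, j}))
         + (PB k * PP D + - (PS k * QQ D)))"
  proof -
    have e0: "FA lam (insert k D) = sc (lam * (1 - of_nat (card (insert k D)))) * tT (insert k D)
      + (\<Sum>i\<in>insert k D. tT (insert k D - {i}))
      - (\<Sum>(i, j)\<in>{(i, j). i \<in> insert k D \<and> j \<in> insert k D \<and> i \<noteq> j}. F i j)"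
      unfolding FA_def F_def by (rule refl)
    show ?thesis unfolding e0 h1 h2 h3 h4 h5 h6 by (rule refl)
  qed
  show ?thesis unfolding e unfolding FA_def a_def by (simp add: algebra_simps)
qed

lemma prod_exp:
  fixes g1 t1 p1 q1 g2 t2 p2 q2 :: "'a::linorder ga"
  assumes e1: "ev g1" and e2: "ev t1" and o1: "od p1" and o2: "od q1"
    and e3: "ev g2" and e4: "ev t2" and o3: "od p2" and o4: "od q2"
  shows "(X k * g1 + t1 - PB k * p1 + PS k * q1) * (X k * g2 + t2 - PB k * p2 + PS k * q2)
   = X k * (g1 * t2 + t1 * g2 + p1 * q2 - q1 * p2) + t1 * t2 - PB k * (p1 * t2 + t1 * p2) + PS k * (q1 * t2 + t1 * q2)"
proof -
  let ?x = "X k" and ?b = "PB k" and ?s = "PS k"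
  have cg1: "\<And>y. g1 * y = y * g1" using ev_comm[OF e1] by blast
  have ct1: "\<And>y. t1 * y = y * t1" using ev_comm[OF e2] by blast
  have cx: "\<And>y. ?x * y = y * ?x" using ev_comm[OF ev_X] by blast
  have f1: "?x * (g1 * (?x * g2)) = 0"
  proof -
    have "?x * (g1 * (?x * g2)) = (?x * ?x) * (g1 * g2)" by (metis mult.assoc cg1) 
    then show ?thesis by (simp add: X_X)
  qed
  have f3: "?x * (g1 * (?b * p2)) = 0"
  proof -
    have "?x * (g1 * (?b * p2)) = (?x * ?b) * (g1 * p2)" by (metis mult.assoc cg1) 
    then show ?thesis by (simp add: X_PB)
  qed
  have f4: "?x * (g1 * (?s * q2)) = 0"
  proof -
    have "?x * (g1 * (?s * q2)) = (?x * ?s) * (g1 * q2)" by (metis mult.assoc cg1) 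
    then show ?thesis by (simp add: X_PS)
  qed
  have f5: "t1 * (?x * g2) = ?x * (t1 * g2)" by (metis mult.assoc ct1)
  have f7: "t1 * (?b * p2) = ?b * (t1 * p2)" by (metis mult.assoc ct1)
  have f8: "t1 * (?s * q2) = ?s * (t1 * q2)" by (metis mult.assoc ct1)
  have f9: "?b * (p1 * (?x * g2)) = 0"
  proof -
    have "?b * (p1 * (?x * g2)) = (?b * ?x) * (p1 * g2)"
      by (metis mult.assoc cx)
    then show ?thesis by (simp add: PB_X)
  qed
  have f13: "?s * (q1 * (?x * g2)) = 0"
  proof -
    have "?s * (q1 * (?x * g2)) = (?s * ?x) * (q1 * g2)"
      by (metis mult.assoc cx)
    then show ?thesis by (simp add: PS_X)
  qed
  have f11: "?b * (p1 * (?b * p2)) = 0"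
  proof -
    have "p1 * ?b = - (?b * p1)" by (rule od_comm[OF o1 od_PB])
    then have "?b * (p1 * (?b * p2)) = - ((?b * ?b) * (p1 * p2))"
      by (simp add: mult.assoc[symmetric]; simp add: mult.assoc)
    then show ?thesis by (simp add: PB_sq)
  qed
  have f16: "?s * (q1 * (?s * q2)) = 0"
  proof -
    have "q1 * ?s = - (?s * q1)" by (rule od_comm[OF o2 od_PS])
    then have "?s * (q1 * (?s * q2)) = - ((?s * ?s) * (q1 * q2))"
      by (simp add: mult.assoc[symmetric]; simp add: mult.assoc)
    then show ?thesis by (simp add: PS_sq)
  qed
  have f12: "?b * (p1 * (?s * q2)) = - (?x * (p1 * q2))"
  proof -
    have "p1 * ?s = - (?s * p1)" by (rule od_comm[OF o1 od_PS])
    then have "?b * (p1 * (?s * q2)) = - ((?b * ?s) * (p1 * q2))"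
      by (simp add: mult.assoc[symmetric]; simp add: mult.assoc)
    then show ?thesis by (simp add: X_def)
  qed
  have f15: "?s * (q1 * (?b * p2)) = ?x * (q1 * p2)"
  proof -
    have "q1 * ?b = - (?b * q1)" by (rule od_comm[OF o2 od_PB])
    then have "?s * (q1 * (?b * p2)) = - ((?s * ?b) * (q1 * p2))"
      by (simp add: mult.assoc[symmetric]; simp add: mult.assoc)
    then show ?thesis by (simp add: PS_PB)
  qed
  show ?thesis
    by (simp add: distrib_left distrib_right left_diff_distrib right_diff_distrib mult.assoc
        f1 f3 f4 f5 f7 f8 f9 f11 f12 f13 f15 f16)
qed

definition WW :: "('a::linorder \<Rightarrow> 'a ga) \<Rightarrow> 'a set \<Rightarrow> 'a ga" where
  "WW f D = (\<Sum>j\<in>D. f j * tT (D - {j}))"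

lemma WW_union:
  assumes fD: "finite D" and fE: "finite E" and dis: "D \<inter> E = {}"
  shows "WW f (D \<union> E) = WW f D * tT E + tT D * WW f E"
proof -
  have "WW f (D \<union> E) = (\<Sum>j\<in>D. f j * tT (D \<union> E - {j})) + (\<Sum>j\<in>E. f j * tT (D \<union> E - {j}))"
    unfolding WW_def by (rule sum.union_disjoint) (use assms in auto)
  also have "(\<Sum>j\<in>D. f j * tT (D \<union> E - {j})) = WW f D * tT E"
    unfolding WW_def sum_distrib_right
  proof (rule sum.cong[OF refl])
    fix j assume j: "j \<in> D"
    then have "D \<union> E - {j} = (D - {j}) \<union> E" using dis by auto
    then have "tT (D \<union> E - {j}) = tT (D - {j}) * tT E" using tT_union[of "D - {j}" E] assms by auto
    then show "f j * tT (D \<union> E - {j}) = f j * tT (D - {j}) * tT E" by (simp add: mult.assoc)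
  qed
  also have "(\<Sum>j\<in>E. f j * tT (D \<union> E - {j})) = tT D * WW f E"
    unfolding WW_def sum_distrib_left
  proof (rule sum.cong[OF refl])
    fix j assume j: "j \<in> E"
    then have "D \<union> E - {j} = D \<union> (E - {j})" using dis by auto
    then have "tT (D \<union> E - {j}) = tT D * tT (E - {j})" using tT_union[of D "E - {j}"] assms by auto
    then show "f j * tT (D \<union> E - {j}) = tT D * (f j * tT (E - {j}))"
      by (metis mult.assoc ev_comm[OF ev_tT])
  qed
  finally show ?thesis .
qed

lemma PP_WW: "PP D = WW PS D" by (simp add: PP_def WW_def)
lemma QQ_WW: "QQ D = WW PB D" by (simp add: QQ_def WW_def)
lemma S1_WW: "(\<Sum>i\<in>D. tT (D - {i})) = WW (\<lambda>_. 1) D" by (simp add: WW_def)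

definition S2 :: "'a::linorder set \<Rightarrow> 'a ga" where
  "S2 D = (\<Sum>(i, j)\<in>{(i, j). i \<in> D \<and> j \<in> D \<and> i \<noteq> j}. PB i * PS j * tT (D - {i, j}))"

lemma S2_union:
  assumes fD: "finite D" and fE: "finite E" and dis: "D \<inter> E = {}"
  shows "S2 (D \<union> E) = S2 D * tT E + tT D * S2 E + QQ D * PP E - PP D * QQ E"
proof -
  define F where "F p = (case p of (i, j) \<Rightarrow> PB i * PS j * tT (D \<union> E - {i, j}))" for p
  let ?pD = "{(i, j). i \<in> D \<and> j \<in> D \<and> i \<noteq> j}"
  let ?pE = "{(i, j). i \<in> E \<and> j \<in> E \<and> i \<noteq> j}"
  have fpD: "finite ?pD" by (rule finite_subset[of _ "D \<times> D"]) (use fD in auto)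
  have fpE: "finite ?pE" by (rule finite_subset[of _ "E \<times> E"]) (use fE in auto)
  have pu: "{(i, j). i \<in> D \<union> E \<and> j \<in> D \<union> E \<and> i \<noteq> j} = ((?pD \<union> ?pE) \<union> (D \<times> E)) \<union> (E \<times> D)"
    using dis by auto
  have "S2 (D \<union> E) = sum F (((?pD \<union> ?pE) \<union> (D \<times> E)) \<union> (E \<times> D))"
    unfolding S2_def pu F_def by simp
  also have "\<dots> = sum F ?pD + sum F ?pE + sum F (D \<times> E) + sum F (E \<times> D)"
  proof -
    have d1: "?pD \<inter> ?pE = {}" using dis by auto
    have d2: "(?pD \<union> ?pE) \<inter> (D \<times> E) = {}" using dis by auto
    have d3: "((?pD \<union> ?pE) \<union> (D \<times> E)) \<inter> (E \<times> D) = {}" using dis by auto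
    have f1: "finite (?pD \<union> ?pE)" using fpD fpE by blast
    have f2: "finite ((?pD \<union> ?pE) \<union> (D \<times> E))" using f1 fD fE by blast
    have fED: "finite (E \<times> D)" using fD fE by blast
    have fDE: "finite (D \<times> E)" using fD fE by blast
    show ?thesis
      unfolding sum.union_disjoint[OF f2 fED d3] sum.union_disjoint[OF f1 fDE d2] sum.union_disjoint[OF fpD fpE d1] ..
  qed
  also have "sum F ?pD = S2 D * tT E"
    unfolding S2_def sum_distrib_right
  proof (rule sum.cong[OF refl])
    fix p assume "p \<in> ?pD"
    then obtain i j where p: "p = (i, j)" "i \<in> D" "j \<in> D" by auto
    then have "D \<union> E - {i, j} = (D - {i, j}) \<union> E" using dis by auto
    then have "tT (D \<union> E - {i, j}) = tT (D - {i, j}) * tT E" using tT_union[of "D - {i, j}" E] assms by auto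
    then show "F p = (case p of (i, j) \<Rightarrow> PB i * PS j * tT (D - {i, j})) * tT E"
      using p by (simp add: F_def mult.assoc)
  qed
  also have "sum F ?pE = tT D * S2 E"
    unfolding S2_def sum_distrib_left
  proof (rule sum.cong[OF refl])
    fix p assume "p \<in> ?pE"
    then obtain i j where p: "p = (i, j)" "i \<in> E" "j \<in> E" by auto
    then have "D \<union> E - {i, j} = D \<union> (E - {i, j})" using dis by auto
    then have "tT (D \<union> E - {i, j}) = tT D * tT (E - {i, j})" using tT_union[of D "E - {i, j}"] assms by auto
    then show "F p = tT D * (case p of (i, j) \<Rightarrow> PB i * PS j * tT (E - {i, j}))"
      using p by (simp add: F_def) (metis mult.assoc ev_comm[OF ev_tT])
  qed
  also have "sum F (D \<times> E) = QQ D * PP E"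
  proof -
    have "QQ D * PP E = (\<Sum>i\<in>D. \<Sum>j\<in>E. PB i * tT (D - {i}) * (PS j * tT (E - {j})))"
      unfolding QQ_def PP_def by (rule sum_product)
    also have "\<dots> = (\<Sum>(i, j)\<in>D \<times> E. PB i * tT (D - {i}) * (PS j * tT (E - {j})))"
      by (rule sum.cartesian_product)
    also have "\<dots> = sum F (D \<times> E)"
    proof (rule sum.cong[OF refl])
      fix p assume "p \<in> D \<times> E"
      then obtain i j where p: "p = (i, j)" "i \<in> D" "j \<in> E" by auto
      then have "D \<union> E - {i, j} = (D - {i}) \<union> (E - {j})" using dis by auto
      then have "tT (D \<union> E - {i, j}) = tT (D - {i}) * tT (E - {j})" using tT_union[of "D - {i}" "E - {j}"] assms by auto
      then show "(case p of (i, j) \<Rightarrow> PB i * tT (D - {i}) * (PS j * tT (E - {j}))) = F p"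
        using p by (simp add: F_def) (metis mult.assoc ev_comm[OF ev_tT])
    qed
    finally show ?thesis by simp
  qed
  also have "sum F (E \<times> D) = - (PP D * QQ E)"
  proof -
    have "PP D * QQ E = (\<Sum>j\<in>D. \<Sum>i\<in>E. PS j * tT (D - {j}) * (PB i * tT (E - {i})))"
      unfolding QQ_def PP_def by (rule sum_product)
    also have "\<dots> = (\<Sum>i\<in>E. \<Sum>j\<in>D. PS j * tT (D - {j}) * (PB i * tT (E - {i})))"
      by (rule sum.swap)
    also have "\<dots> = (\<Sum>(i, j)\<in>E \<times> D. PS j * tT (D - {j}) * (PB i * tT (E - {i})))"
      by (rule sum.cartesian_product)
    also have "\<dots> = (\<Sum>p\<in>E \<times> D. - F p)"
    proof (rule sum.cong[OF refl])
      fix p assume "p \<in> E \<times> D"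
      then obtain i j where p: "p = (i, j)" "i \<in> E" "j \<in> D" by auto
      then have "D \<union> E - {i, j} = (D - {j}) \<union> (E - {i})" using dis by auto
      then have "tT (D \<union> E - {i, j}) = tT (D - {j}) * tT (E - {i})" using tT_union[of "D - {j}" "E - {i}"] assms by auto
      moreover have "PS j * tT (D - {j}) * (PB i * tT (E - {i})) = PS j * PB i * (tT (D - {j}) * tT (E - {i}))"
        by (metis mult.assoc ev_comm[OF ev_tT])
      moreover have "PS j * PB i = - (PB i * PS j)" by (rule od_comm[OF od_PS od_PB])
      ultimately show "(case p of (i, j) \<Rightarrow> PS j * tT (D - {j}) * (PB i * tT (E - {i}))) = - F p"
        using p by (simp add: F_def)
    qed
    finally show ?thesis by (simp add: sum_negf)
  qed
  finally show ?thesis by simp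
qed

lemma FA_alt: "FA lam D - sc lam * tT D = sc (- (lam * of_nat (card D))) * tT D + WW (\<lambda>_. 1) D - S2 D"
proof -
  have h0: "sc (lam * (1 - of_nat (card D))) = sc (- (lam * of_nat (card D))) + sc lam"
    by (simp add: sc_add[symmetric] algebra_simps)
  have h: "sc (lam * (1 - of_nat (card D))) * tT D = sc (- (lam * of_nat (card D))) * tT D + sc lam * tT D"
    by (subst h0) (rule distrib_right)
  show ?thesis unfolding FA_def S1_WW S2_def h by (simp add: algebra_simps)
qed

lemma G_union:
  assumes fD: "finite D" and fE: "finite E" and dis: "D \<inter> E = {}"
    and mu: "mu * of_nat (card D + card E) = lam * of_nat (card D) + lam' * of_nat (card E)"
  shows "FA mu (D \<union> E) - sc mu * tT (D \<union> E) =
     (FA lam D - sc lam * tT D) * tT E + tT D * (FA lam' E - sc lam' * tT E) + PP D * QQ E - QQ D * PP E"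
proof -
  have c: "card (D \<union> E) = card D + card E" using assms by (simp add: card_Un_disjoint)
  have s: "sc (- (mu * of_nat (card (D \<union> E)))) = sc (- (lam * of_nat (card D))) + sc (- (lam' * of_nat (card E)))"
    unfolding c mu by (simp add: sc_add[symmetric])
  have t: "tT D * (sc a * tT E) = sc a * (tT D * tT E)" for a
  proof -
    have "tT D * (sc a * tT E) = (tT D * sc a) * tT E" by (simp only: mult.assoc)
    also have "\<dots> = (sc a * tT D) * tT E" by (simp only: sc_comm)
    finally show ?thesis by (simp only: mult.assoc)
  qed
  show ?thesis
    unfolding FA_alt unfolding WW_union[OF assms(1-3)] S2_union[OF assms(1-3)] tT_union[OF assms(1-3)] s
    by (simp only: distrib_right distrib_left left_diff_distrib right_diff_distrib mult.assoc t) (simp add: algebra_simps)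
qed

lemma ev_G: "ev (FA lam D - sc lam * tT D)"
  by (intro ev_diff ev_FA ev_mult ev_sc ev_tT)

lemma main1:
  fixes A B :: "'a::linorder set"
  assumes fA: "finite A" and fB: "finite B" and k: "A \<inter> B = {k}"
  shows "FA lam A * FA lam' B =
    FA (((of_nat (card A) - 1) * lam + (of_nat (card B) - 1) * lam') / (of_nat (card A) + of_nat (card B) - 2)) (A \<union> B)"
proof -
  define D where "D = A - {k}"
  define E where "E = B - {k}"
  define mu where "mu = ((of_nat (card A) - 1) * lam + (of_nat (card B) - 1) * lam') / (of_nat (card A) + of_nat (card B) - 2)"
  have kA: "k \<in> A" and kB: "k \<in> B" using k by auto
  have A: "A = insert k D" and B: "B = insert k E" using kA kB by (auto simp: D_def E_def)
  have fD: "finite D" and fE: "finite E" using fA fB by (auto simp: D_def E_def)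
  have kD: "k \<notin> D" and kE: "k \<notin> E" by (auto simp: D_def E_def)
  have dis: "D \<inter> E = {}" using k by (auto simp: D_def E_def)
  have AB: "A \<union> B = insert k (D \<union> E)" using A B by auto
  have kDE: "k \<notin> D \<union> E" using kD kE by auto
  have cA: "card A = card D + 1" using A fD kD by simp
  have cB: "card B = card E + 1" using B fE kE by simp
  have mu_eq: "mu = (of_nat (card D) * lam + of_nat (card E) * lam') / (of_nat (card D) + of_nat (card E))"
    unfolding mu_def cA cB by (simp add: algebra_simps)
  have mu: "mu * of_nat (card D + card E) = lam * of_nat (card D) + lam' * of_nat (card E)"
  proof (cases "card D + card E = 0")
    case True then show ?thesis by simp
  next
    case False
    then have "(of_nat (card D) + of_nat (card E) :: complex) \<noteq> 0"
      by (metis of_nat_add of_nat_eq_0_iff)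
    then show ?thesis unfolding mu_eq by (simp add: field_simps)
  qed
  have "FA lam A * FA lam' B =
    (X k * (FA lam D - sc lam * tT D) + tT D - PB k * PP D + PS k * QQ D) *
    (X k * (FA lam' E - sc lam' * tT E) + tT E - PB k * PP E + PS k * QQ E)"
    unfolding A B using decomp[OF fD kD] decomp[OF fE kE] by simp
  also have "\<dots> = X k * ((FA lam D - sc lam * tT D) * tT E + tT D * (FA lam' E - sc lam' * tT E) + PP D * QQ E - QQ D * PP E)
     + tT D * tT E - PB k * (PP D * tT E + tT D * PP E) + PS k * (QQ D * tT E + tT D * QQ E)"
    by (rule prod_exp) (intro ev_G ev_tT od_PP od_QQ)+
  also have "\<dots> = X k * (FA mu (D \<union> E) - sc mu * tT (D \<union> E)) + tT (D \<union> E) - PB k * PP (D \<union> E) + PS k * QQ (D \<union> E)"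
    unfolding G_union[OF fD fE dis mu] unfolding tT_union[OF fD fE dis] PP_WW QQ_WW WW_union[OF fD fE dis] ..
  also have "\<dots> = FA mu (A \<union> B)"
    unfolding AB by (rule decomp[symmetric]) (use fD fE kDE in auto)
  finally show ?thesis unfolding mu_def .
qed

lemma nz_aux: "(n::nat) \<ge> 2 \<Longrightarrow> (of_nat n - 1 :: complex) \<noteq> 0"
proof -
  assume n: "n \<ge> 2"
  have "(of_nat n - 1 :: complex) = of_nat (n - 1)" using n by (simp add: of_nat_diff)
  moreover have "n - 1 \<noteq> 0" using n by simp
  ultimately show ?thesis by simp
qed

lemma FA_card1: "card A = 1 \<Longrightarrow> FA a A = FA b A"
  unfolding FA_def by simp

lemma FA_single: "FA lam {l} = 1"
proof -
  have e: "{(i, j). i \<in> {l} \<and> j \<in> {l} \<and> i \<noteq> j} = {}" by auto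
  show ?thesis unfolding FA_def e by (simp add: sc_0 tT_empty)
qed

lemma tT_single: "tT {l} = X l"
  using tT_insert[of "{}" l] by (simp add: tT_empty)

lemma pair_sq:
  assumes "k \<noteq> l"
  shows "FA lam {k, l} * FA lam' {k, l} = 0"
proof -
  have PPl: "PP {l} = PS l" by (simp add: PP_def tT_empty)
  have QQl: "QQ {l} = PB l" by (simp add: QQ_def tT_empty)
  have kl: "k \<notin> {l}" using assms by simp
  have g: "(1 - sc c * X l) * X l = X l" "X l * (1 - sc c * X l) = X l" for c
  proof -
    show "(1 - sc c * X l) * X l = X l" by (simp add: left_diff_distrib mult.assoc X_X)
    have "X l * (sc c * X l) = sc c * (X l * X l)" by (metis mult.assoc sc_comm)
    then show "X l * (1 - sc c * X l) = X l" by (simp add: right_diff_distrib X_X)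
  qed
  have "FA lam {k, l} * FA lam' {k, l} =
    (X k * (1 - sc lam * X l) + X l - PB k * PS l + PS k * PB l) *
    (X k * (1 - sc lam' * X l) + X l - PB k * PS l + PS k * PB l)"
    using decomp[of "{l}" k lam, OF _ kl] decomp[of "{l}" k lam', OF _ kl]
    by (simp add: FA_single tT_single PPl QQl)
  also have "\<dots> = X k * ((1 - sc lam * X l) * X l + X l * (1 - sc lam' * X l) + PS l * PB l - PB l * PS l)
      + X l * X l - PB k * (PS l * X l + X l * PS l) + PS k * (PB l * X l + X l * PB l)"
    by (rule prod_exp) (intro ev_diff ev_1 ev_mult ev_sc ev_X od_PS od_PB)+
  also have "\<dots> = 0"
    by (simp add: g X_X PS_X X_PS PB_X X_PB PS_PB X_def[symmetric])
  finally show ?thesis .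
qed

lemma split_pair:
  assumes fA: "finite A" and kl: "k \<noteq> l" "k \<in> A" "l \<in> A"
  shows "FA lam A = FA lam {k, l} * FA lam (A - {k})"
proof -
  have i: "{k, l} \<inter> (A - {k}) = {l}" using kl by auto
  have u: "{k, l} \<union> (A - {k}) = A" using kl by auto
  have c2: "card {k, l} = 2" using kl by simp
  have cA: "card (A - {k}) = card A - 1" using kl fA by simp
  have ge: "card A \<ge> 2"
  proof -
    have "{k, l} \<subseteq> A" using kl by auto
    then show ?thesis using card_mono[OF fA] c2 by metis
  qed
  have "(((of_nat (card {k, l}) - 1) * lam + (of_nat (card (A - {k})) - 1) * lam) /
        (of_nat (card {k, l}) + of_nat (card (A - {k})) - 2)) = lam"
  proof -
    have nz: "(of_nat (card A) - 1 :: complex) \<noteq> 0" using ge by (rule nz_aux)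
    have e1: "(of_nat (card (A - {k})) :: complex) = of_nat (card A) - 1" using ge cA by (simp add: of_nat_diff)
    show ?thesis unfolding c2 e1 using nz by (simp add: field_simps)
  qed
  then show ?thesis using main1[OF _ _ i, of lam lam] fA u by simp
qed

lemma main2:
  fixes A B :: "'a::linorder set"
  assumes fA: "finite A" and fB: "finite B" and c: "card (A \<inter> B) \<ge> 2"
  shows "FA lam A * FA lam' B = 0"
proof -
  obtain k l where kl: "k \<noteq> l" "k \<in> A \<inter> B" "l \<in> A \<inter> B"
  proof -
    have "A \<inter> B \<noteq> {}" using c by auto
    then obtain k where k: "k \<in> A \<inter> B" by blast
    have "card (A \<inter> B - {k}) \<ge> 1" using c k fA by simp
    then obtain l where "l \<in> A \<inter> B - {k}" by (metis card.empty ex_in_conv not_one_le_zero)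
    then show ?thesis using that k by auto
  qed
  have "FA lam A * FA lam' B = (FA lam {k, l} * FA lam (A - {k})) * (FA lam' {k, l} * FA lam' (B - {k}))"
    using split_pair[OF fA, of k l lam] split_pair[OF fB, of k l lam'] kl by auto
  also have "\<dots> = (FA lam {k, l} * FA lam' {k, l}) * (FA lam (A - {k}) * FA lam' (B - {k}))"
  proof -
    have "FA lam (A - {k}) * FA lam' {k, l} = FA lam' {k, l} * FA lam (A - {k})" by (rule ev_comm[OF ev_FA])
    then show ?thesis by (simp only: mult.assoc) (simp only: mult.assoc[symmetric])
  qed
  also have "\<dots> = 0" using pair_sq[OF kl(1)] by simp
  finally show ?thesis .
qed

theorem lemma4p1:
  fixes V :: "'a::linorder set" and A B :: "'a set" and lam lam' :: complex
  assumes "finite V" and "A \<subseteq> V" and "B \<subseteq> V" and "A \<inter> B \<noteq> {}"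
  shows "(card (A \<inter> B) = 1 \<longrightarrow> gmul (fA lam A) (fA lam B) = fA lam (A \<union> B))
       \<and> (card (A \<inter> B) \<ge> 2 \<longrightarrow> gmul (fA lam A) (fA lam B) = gzero)
       \<and> (card (A \<inter> B) = 1 \<longrightarrow>
            gmul (fA lam A) (fA lam' B) =
            fA (((of_nat (card A) - 1) * lam + (of_nat (card B) - 1) * lam')
                  / (of_nat (card A) + of_nat (card B) - 2)) (A \<union> B))
       \<and> (card (A \<inter> B) = 1 \<longrightarrow>
            gmul (fA lam A) (fA lam' B) =
            fA (((of_nat (card A) - 1) * lam + (of_nat (card B) - 1) * lam')
                  / (of_nat (card (A \<union> B)) - 1)) (A \<union> B))
       \<and> (card (A \<inter> B) \<ge> 2 \<longrightarrow> gmul (fA lam A) (fA lam' B) = gzero)"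
proof -
  have fA: "finite A" and fB: "finite B" using assms finite_subset by auto
  have gm: "gmul (fA a A) (fA b B) = rep (FA a A * FA b B)" for a b
    by (simp add: times_ga.rep_eq rep_FA)
  have z: "gzero = rep (0 :: 'a ga)" by (simp add: gzero_def zero_ga.rep_eq)
  have P3: "card (A \<inter> B) = 1 \<Longrightarrow> gmul (fA lam A) (fA lam' B) =
            fA (((of_nat (card A) - 1) * lam + (of_nat (card B) - 1) * lam')
                  / (of_nat (card A) + of_nat (card B) - 2)) (A \<union> B)" for lam lam'
  proof -
    assume "card (A \<inter> B) = 1"
    then obtain k where k: "A \<inter> B = {k}" by (rule card_1_singletonE)
    show ?thesis unfolding gm main1[OF fA fB k] rep_FA ..
  qed
  have P5: "card (A \<inter> B) \<ge> 2 \<Longrightarrow> gmul (fA lam A) (fA lam' B) = gzero" for lam lam'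
    unfolding gm z using main2[OF fA fB] by simp
  have P1: "card (A \<inter> B) = 1 \<Longrightarrow> gmul (fA lam A) (fA lam B) = fA lam (A \<union> B)"
  proof -
    assume c: "card (A \<inter> B) = 1"
    have cu: "card A + card B = card (A \<union> B) + 1" using card_Un_Int[OF fA fB] c by simp
    have "fA (((of_nat (card A) - 1) * lam + (of_nat (card B) - 1) * lam)
                  / (of_nat (card A) + of_nat (card B) - 2)) (A \<union> B) = fA lam (A \<union> B)"
    proof (cases "card (A \<union> B) = 1")
      case True
      then show ?thesis unfolding rep_FA[symmetric] using FA_card1 by metis
    next
      case False
      have "card (A \<union> B) \<noteq> 0" using fA fB assms(4) by auto
      then have "card (A \<union> B) \<ge> 2" using False by linarith
      then have nz0: "(of_nat (card (A \<union> B)) - 1 :: complex) \<noteq> 0" by (rule nz_aux)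
      have "(of_nat (card A) + of_nat (card B) :: complex) = of_nat (card (A \<union> B)) + 1"
        using arg_cong[OF cu, of "of_nat :: nat \<Rightarrow> complex"] by simp
      then have nz: "(of_nat (card A) + of_nat (card B) - 2 :: complex) \<noteq> 0" using nz0 by simp
      have "((of_nat (card A) - 1) * lam + (of_nat (card B) - 1) * lam) = lam * (of_nat (card A) + of_nat (card B) - 2)"
        by (simp add: algebra_simps)
      then show ?thesis using nz by simp
    qed
    then show ?thesis using P3[OF c, of lam lam] by simp
  qed
  have P4: "card (A \<inter> B) = 1 \<Longrightarrow> gmul (fA lam A) (fA lam' B) =
            fA (((of_nat (card A) - 1) * lam + (of_nat (card B) - 1) * lam')
                  / (of_nat (card (A \<union> B)) - 1)) (A \<union> B)"
  proof -
    assume c: "card (A \<inter> B) = 1"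
    have cu: "card A + card B = card (A \<union> B) + 1" using card_Un_Int[OF fA fB] c by simp
    have "(of_nat (card A) + of_nat (card B) :: complex) = of_nat (card (A \<union> B)) + 1"
      using arg_cong[OF cu, of "of_nat :: nat \<Rightarrow> complex"] by simp
    then have "(of_nat (card A) + of_nat (card B) - 2 :: complex) = of_nat (card (A \<union> B)) - 1"
      by simp
    then show ?thesis using P3[OF c] by simp
  qed
  show ?thesis using P1 P5 P3 P4 by blast
qed

end
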